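(* Let $a\ge b\ge2$ and $k$ be integers with $2a+3\le k\le2a+2b-1$. Then for every $(i,j)\in\overline{Q}_1$: - $w_1,w_3,w_5\in\mathcal{R}^k_{(a,b),(i,j)}$; - if $b\ge\lceil(a+3)/2\rceil$ and $k=a+2b$, then $w_4\in\mathcal{R}^k_{(a,b),(i,j)}$; - if $b\ge\lceil a/2\rceil+2$ and $2a+3\le k\le a+2b-1$, then $w_6\in\mathcal{R}^k_{(a,b),(i,j)}$.
   Context: $\widehat{\mathfrak{su}}(3)_k$ fusion. Let $P_+^k=\{(\lambda_1,\lambda_2)\in\mathbb{Z}_{\ge0}^2:\lambda_1+\lambda_2\le k\}$. For $\lambda,\mu,\nu\in P_+^k$ set - $\mathcal{A}=\tfrac13[2(\lambda_1+\mu_1+\nu_2)+\lambda_2+\mu_2+\nu_1]$, - $\mathcal{B}=\tfrac13[\lambda_1+\mu_1+\nu_2+2(\lambda_2+\mu_2+\nu_1)]$, - $k_0^{\max}=\min(\mathcal{A},\mathcal{B})$, - $k_0^{\min}=\max(\lambda_1+\lambda_2,\mu_1+\mu_2,\nu_1+\nu_2,\mathcal{A}-\lambda_1,\mathcal{A}-\mu_1,\mathcal{A}-\nu_2,\mathcal{B}-\lambda_2,\mathcal{B}-\mu_2,\mathcal{B}-\nu_1)$. The fusion multiplicity is $N^{(k)\nu}_{\lambda,\mu}=\min(k_0^{\max},k)-k_0^{\min}+1$ if $\mathcal{A},\mathcal{B}$ are nonnegative integers, $k_0^{\max}\ge k_0^{\min}$ and $k\ge k_0^{\min}$; otherwise it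 is $0$. The set $\mathcal{R}^k_{\lambda,\mu}$ is $\{\nu\in P_+^k:N^{(k)\nu}_{\lambda,\mu}\ne0\}$. The candidate weights are $w_1=(a-1,b+2)$, $w_2=(a+2,b-1)$, $w_3=(a+1,b-2)$, $w_4=(a-2,b+1)$, $w_5=(a+1,b+1)$, $w_6=(a-1,b-1)$. The set $\overline{Q}_1$ is defined by $\overline{Q}_1=\{(3p-k,2k-3p):p\in\mathbb{Z},\ \lceil(k+1)/2\rceil\le p\le\min(a+b,k-a-1,\lfloor2k/3\rfloor,\lfloor(b+k)/2\rfloor)\}$. *)

theory Defs
  imports Complex_Main
begin

type_synonym wt = "int \<times> int"

definition dom_wts :: "int \<Rightarrow> wt set" where
  "dom_wts k = {(l1, l2). 0 \<le> l1 \<and> 0 \<le> l2 \<and> l1 + l2 \<le> k}"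

definition calA :: "wt \<Rightarrow> wt \<Rightarrow> wt \<Rightarrow> rat" where
  "calA l m n = (2 * of_int (fst l + fst m + snd n) + of_int (snd l + snd m + fst n)) / 3"

definition calB :: "wt \<Rightarrow> wt \<Rightarrow> wt \<Rightarrow> rat" where
  "calB l m n = (of_int (fst l + fst m + snd n) + 2 * of_int (snd l + snd m + fst n)) / 3"

definition k0max :: "wt \<Rightarrow> wt \<Rightarrow> wt \<Rightarrow> rat" where
  "k0max l m n = min (calA l m n) (calB l m n)"

definition k0min :: "wt \<Rightarrow> wt \<Rightarrow> wt \<Rightarrow> rat" where
  "k0min l m n = Max {of_int (fst l + snd l), of_int (fst m + snd m), of_int (fst n + snd n),
     calA l m n - of_int (fst l), calA l m n - of_int (fst m), calA l m n - of_int (snd n),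
     calB l m n - of_int (snd l), calB l m n - of_int (snd m), calB l m n - of_int (fst n)}"

definition fusion_mult :: "int \<Rightarrow> wt \<Rightarrow> wt \<Rightarrow> wt \<Rightarrow> rat" where
  "fusion_mult k l m n =
    (if calA l m n \<in> \<int> \<and> calA l m n \<ge> 0 \<and> calB l m n \<in> \<int> \<and> calB l m n \<ge> 0
        \<and> k0max l m n \<ge> k0min l m n \<and> of_int k \<ge> k0min l m n
     then min (k0max l m n) (of_int k) - k0min l m n + 1 else 0)"

definition fusion_R :: "int \<Rightarrow> wt \<Rightarrow> wt \<Rightarrow> wt set" where
  "fusion_R k l m = {n \<in> dom_wts k. fusion_mult k l m n \<noteq> 0}"

definition Q1bar :: "int \<Rightarrow> int \<Rightarrow> int \<Rightarrow> wt set" where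
  "Q1bar a b k = {(3 * p - k, 2 * k - 3 * p) | p :: int.
     \<lceil>(real_of_int k + 1) / 2\<rceil> \<le> p \<and>
     p \<le> min (a + b) (min (k - a - 1) (min \<lfloor>2 * real_of_int k / 3\<rfloor> \<lfloor>(real_of_int b + real_of_int k) / 2\<rfloor>))}"

definition w1 :: "int \<Rightarrow> int \<Rightarrow> wt" where "w1 a b = (a - 1, b + 2)"
definition w2 :: "int \<Rightarrow> int \<Rightarrow> wt" where "w2 a b = (a + 2, b - 1)"
definition w3 :: "int \<Rightarrow> int \<Rightarrow> wt" where "w3 a b = (a + 1, b - 2)"
definition w4 :: "int \<Rightarrow> int \<Rightarrow> wt" where "w4 a b = (a - 2, b + 1)"
definition w5 :: "int \<Rightarrow> int \<Rightarrow> wt" where "w5 a b = (a + 1, b + 1)"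
definition w6 :: "int \<Rightarrow> int \<Rightarrow> wt" where "w6 a b = (a - 1, b - 1)"

end

theory Submission
  imports Defs
begin

lemma fm_nz:
  fixes A B k :: int
  assumes "calA l m n = of_int A" "calB l m n = of_int B" "0 \<le> A" "0 \<le> B"
    and "\<And>t. t \<in> {fst l + snd l, fst m + snd m, fst n + snd n,
       A - fst l, A - fst m, A - snd n, B - snd l, B - snd m, B - fst n} \<Longrightarrow> t \<le> A \<and> t \<le> B \<and> t \<le> k"
  shows "fusion_mult k l m n \<noteq> 0"
proof -
  define S where "S = {fst l + snd l, fst m + snd m, fst n + snd n,
       A - fst l, A - fst m, A - snd n, B - snd l, B - snd m, B - fst n}"
  define c where "c = min A (min B k)"
  have h: "\<And>t. t \<in> S \<Longrightarrow> rat_of_int t \<le> of_int c"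
  proof -
    fix t assume "t \<in> S"
    then have "t \<le> c" using assms(5)[of t] unfolding S_def c_def by simp
    then show "rat_of_int t \<le> of_int c" by (simp only: of_int_le_iff)
  qed
  have SE: "{of_int (fst l + snd l), of_int (fst m + snd m), of_int (fst n + snd n),
     calA l m n - of_int (fst l), calA l m n - of_int (fst m), calA l m n - of_int (snd n),
     calB l m n - of_int (snd l), calB l m n - of_int (snd m), calB l m n - of_int (fst n)}
     = (of_int ` S :: rat set)"
    unfolding S_def assms(1,2) by (simp only: image_insert image_empty of_int_diff)
  have fin: "finite (of_int ` S :: rat set)" "(of_int ` S :: rat set) \<noteq> {}" unfolding S_def by simp_all
  have M: "k0min l m n \<le> of_int c"
    unfolding k0min_def SE Max_le_iff[OF fin] using h by blast
  have X: "k0max l m n = of_int (min A B)" unfolding k0max_def assms(1,2) by simp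
  have c1: "c \<le> min A B" "c \<le> k" unfolding c_def by auto
  have c2: "of_int c \<le> k0max l m n" "of_int c \<le> (of_int k :: rat)" using c1 unfolding X by simp_all
  have c3: "of_int c \<le> min (k0max l m n) (of_int k)" using c2 by simp
  have pos: "min (k0max l m n) (of_int k) - k0min l m n + 1 \<noteq> 0" using M c3 by linarith
  have cond: "calA l m n \<in> \<int> \<and> calA l m n \<ge> 0 \<and> calB l m n \<in> \<int> \<and> calB l m n \<ge> 0
        \<and> k0max l m n \<ge> k0min l m n \<and> of_int k \<ge> k0min l m n"
    using assms(3,4) M c2 unfolding assms(1,2) by auto
  show ?thesis unfolding fusion_mult_def using cond pos by (simp only: simp_thms if_True)
qed

lemma cA: "calA (a,b) (3*p-k, 2*k-3*p) (x,y) = of_int (2*a+b+3*p+2*y+x) / 3"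
  unfolding calA_def by (simp add: algebra_simps)
lemma cB: "calB (a,b) (3*p-k, 2*k-3*p) (x,y) = of_int (a+2*b+3*k-3*p+y+2*x) / 3"
  unfolding calB_def by (simp add: algebra_simps)

lemma div3: "of_int (3 * z) / (3::rat) = of_int z" by simp


lemma cA': "2*a+b+3*p+2*y+x = 3*A \<Longrightarrow> calA (a,b) (3*p-k, 2*k-3*p) (x,y) = of_int A"
  using cA[of a b p k x y] div3[of A] by simp
lemma cB': "a+2*b+3*k-3*p+y+2*x = 3*B \<Longrightarrow> calB (a,b) (3*p-k, 2*k-3*p) (x,y) = of_int B"
  using cB[of a b p k x y] div3[of B] by simp

lemma memR:
  fixes A B k :: int
  assumes "2*a+b+3*p+2*y+x = 3*A" "a+2*b+3*k-3*p+y+2*x = 3*B" "0 \<le> A" "0 \<le> B"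
    "0 \<le> x" "0 \<le> y" "x + y \<le> k"
    "a+b \<le> A" "a+b \<le> B" "a+b \<le> k"
    "3*p-k + (2*k-3*p) \<le> A" "3*p-k + (2*k-3*p) \<le> B" "3*p-k + (2*k-3*p) \<le> k"
    "x+y \<le> A" "x+y \<le> B"
    "A - a \<le> A" "A - a \<le> B" "A - a \<le> k"
    "A - (3*p-k) \<le> A" "A - (3*p-k) \<le> B" "A - (3*p-k) \<le> k"
    "A - y \<le> A" "A - y \<le> B" "A - y \<le> k"
    "B - b \<le> A" "B - b \<le> B" "B - b \<le> k"
    "B - (2*k-3*p) \<le> A" "B - (2*k-3*p) \<le> B" "B - (2*k-3*p) \<le> k"
    "B - x \<le> A" "B - x \<le> B" "B - x \<le> k"
  shows "(x,y) \<in> fusion_R k (a,b) (3*p-k, 2*k-3*p)"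
proof -
  have "t \<le> A \<and> t \<le> B \<and> t \<le> k" if "t \<in> {fst (a,b) + snd (a,b), fst (3*p-k, 2*k-3*p) + snd (3*p-k, 2*k-3*p), fst (x,y) + snd (x,y),
       A - fst (a,b), A - fst (3*p-k, 2*k-3*p), A - snd (x,y), B - snd (a,b), B - snd (3*p-k, 2*k-3*p), B - fst (x,y)}" for t
    using that by (elim insertE emptyE; hypsubst; simp only: fst_conv snd_conv assms simp_thms)
  note F = fm_nz[OF cA'[OF assms(1)] cB'[OF assms(2)] assms(3,4) this]
  have D: "(x,y) \<in> dom_wts k" unfolding dom_wts_def using assms(5-7) by simp
  show ?thesis unfolding fusion_R_def using F D by (simp only: mem_Collect_eq simp_thms)
qed

theorem mainTheorem8:
  fixes a b k :: int
  assumes "a \<ge> b" and "b \<ge> 2"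
    and "2 * a + 3 \<le> k" and "k \<le> 2 * a + 2 * b - 1"
  shows "\<forall>(i, j) \<in> Q1bar a b k.
      w1 a b \<in> fusion_R k (a, b) (i, j) \<and>
      w3 a b \<in> fusion_R k (a, b) (i, j) \<and>
      w5 a b \<in> fusion_R k (a, b) (i, j) \<and>
      (b \<ge> \<lceil>(real_of_int a + 3) / 2\<rceil> \<and> k = a + 2 * b \<longrightarrow> w4 a b \<in> fusion_R k (a, b) (i, j)) \<and>
      (b \<ge> \<lceil>real_of_int a / 2\<rceil> + 2 \<and> 2 * a + 3 \<le> k \<and> k \<le> a + 2 * b - 1
         \<longrightarrow> w6 a b \<in> fusion_R k (a, b) (i, j))"
proof (intro ballI, clarify)
  fix i j assume "(i, j) \<in> Q1bar a b k"
  then obtain p where ij: "i = 3*p-k" "j = 2*k-3*p"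
    and h1: "\<lceil>(real_of_int k + 1) / 2\<rceil> \<le> p"
    and h2: "p \<le> min (a + b) (min (k - a - 1) (min \<lfloor>2 * real_of_int k / 3\<rfloor> \<lfloor>(real_of_int b + real_of_int k) / 2\<rfloor>))"
    unfolding Q1bar_def by blast
  from h1 have p1: "k + 1 \<le> 2*p" by (simp add: ceiling_le_iff)
  from h2 have p2: "p \<le> a+b" "p \<le> k-a-1" by auto
  from h2 have "p \<le> \<lfloor>2 * real_of_int k / 3\<rfloor>" by auto
  hence "real_of_int p \<le> 2 * real_of_int k / 3" by (simp add: le_floor_iff)
  hence p3: "3*p \<le> 2*k" by linarith
  from h2 have "p \<le> \<lfloor>(real_of_int b + real_of_int k) / 2\<rfloor>" by auto
  hence "real_of_int p \<le> (real_of_int b + real_of_int k) / 2" by (simp add: le_floor_iff)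
  hence "real_of_int (2*p) \<le> real_of_int (b+k)" by simp
  hence p4: "2*p \<le> b+k" by (simp only: of_int_le_iff)
  note H = assms p1 p2 p3 p4
  have r1: "w1 a b \<in> fusion_R k (a, b) (i, j)"
    unfolding w1_def ij
      apply (rule memR[where A="a+b+p+1" and B="a+b+k-p"])
        apply (simp add: algebra_simps)
       apply (simp add: algebra_simps)
      using H by linarith+
  have r3: "w3 a b \<in> fusion_R k (a, b) (i, j)"
    unfolding w3_def ij
      apply (rule memR[where A="a+b+p-1" and B="a+b+k-p"])
        apply (simp add: algebra_simps)
       apply (simp add: algebra_simps)
      using H by linarith+
  have r5: "w5 a b \<in> fusion_R k (a, b) (i, j)"
    unfolding w5_def ij
      apply (rule memR[where A="a+b+p+1" and B="a+b+k-p+1"])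
        apply (simp add: algebra_simps)
       apply (simp add: algebra_simps)
      using H by linarith+
  have r4: "w4 a b \<in> fusion_R k (a, b) (i, j)"
    if c: "b \<ge> \<lceil>(real_of_int a + 3) / 2\<rceil>" "k = a + 2 * b"
  proof -
    from c(1) have c2: "a + 3 \<le> 2*b" by (simp add: ceiling_le_iff)
    show ?thesis
      unfolding w4_def ij
      apply (rule memR[where A="a+b+p" and B="a+b+k-p-1"])
        apply (simp add: algebra_simps)
       apply (simp add: algebra_simps)
      using H c(2) c2 by linarith+
  qed
  have r6: "w6 a b \<in> fusion_R k (a, b) (i, j)"
    if c: "b \<ge> \<lceil>real_of_int a / 2\<rceil> + 2" "k \<le> a + 2 * b - 1"
  proof -
    from c(1) have "\<lceil>real_of_int a / 2\<rceil> \<le> b - 2" by linarith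
    hence c2: "a \<le> 2*(b-2)" by (simp add: ceiling_le_iff)
    show ?thesis
      unfolding w6_def ij
      apply (rule memR[where A="a+b+p-1" and B="a+b+k-p-1"])
        apply (simp add: algebra_simps)
       apply (simp add: algebra_simps)
      using H c(2) c2 by linarith+
  qed
  show "w1 a b \<in> fusion_R k (a, b) (i, j) \<and>
      w3 a b \<in> fusion_R k (a, b) (i, j) \<and>
      w5 a b \<in> fusion_R k (a, b) (i, j) \<and>
      (b \<ge> \<lceil>(real_of_int a + 3) / 2\<rceil> \<and> k = a + 2 * b \<longrightarrow> w4 a b \<in> fusion_R k (a, b) (i, j)) \<and>
      (b \<ge> \<lceil>real_of_int a / 2\<rceil> + 2 \<and> 2 * a + 3 \<le> k \<and> k \<le> a + 2 * b - 1
         \<longrightarrow> w6 a b \<in> fusion_R k (a, b) (i, j))"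
    using r1 r3 r5 r4 r6 by blast
qed

end
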